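(* Let $G$ be a bipartite graph of order $n$. Then $$Mo(G) \leq \alpha_1(1-\alpha_1)(1-2\alpha_1)n^3=\frac{\sqrt{3}}{18}n^3,$$ where $\alpha_1=\frac{1}{2}\left(1-\frac{1}{\sqrt{3}}\right)$.
   Context: All graphs are finite and simple. For a graph $G$ and an edge $uv$ of $G$, $n_G(u,v)$ denotes the number of vertices of $G$ whose distance in $G$ to $u$ is strictly smaller than their distance in $G$ to $v$. The Mostar index of $G$ is $Mo(G)=\sum_{uv\in E(G)}|n_G(u,v)-n_G(v,u)|$. *)

theory Defs
  imports Complex_Main "HOL-Library.Extended_Nat"
begin

definition simple_graph :: "'a set \<Rightarrow> ('a \<Rightarrow> 'a \<Rightarrow> bool) \<Rightarrow> bool" where
  "simple_graph V E \<longleftrightarrow> finite V \<and> (\<forall>x y. E x y \<longrightarrow> x \<in> V \<and> y \<in> V)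
     \<and> (\<forall>x y. E x y \<longrightarrow> E y x) \<and> (\<forall>x. \<not> E x x)"

definition bipartite :: "'a set \<Rightarrow> ('a \<Rightarrow> 'a \<Rightarrow> bool) \<Rightarrow> bool" where
  "bipartite V E \<longleftrightarrow> (\<exists>A B. A \<union> B = V \<and> A \<inter> B = {} \<and>
     (\<forall>x y. E x y \<longrightarrow> (x \<in> A \<and> y \<in> B) \<or> (x \<in> B \<and> y \<in> A)))"

fun walk :: "('a \<Rightarrow> 'a \<Rightarrow> bool) \<Rightarrow> 'a list \<Rightarrow> bool" where
  "walk E [] = False"
| "walk E [x] = True"
| "walk E (x # y # xs) = (E x y \<and> walk E (y # xs))"

text \<open>Graph distance (infinite if no walk exists).\<close>
definition gdist :: "('a \<Rightarrow> 'a \<Rightarrow> bool) \<Rightarrow> 'a \<Rightarrow> 'a \<Rightarrow> enat" where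
  "gdist E u v = (INF xs \<in> {xs. walk E xs \<and> hd xs = u \<and> last xs = v}. enat (length xs - 1))"

definition n_closer :: "'a set \<Rightarrow> ('a \<Rightarrow> 'a \<Rightarrow> bool) \<Rightarrow> 'a \<Rightarrow> 'a \<Rightarrow> nat" where
  "n_closer V E u v = card {w \<in> V. gdist E w u < gdist E w v}"

text \<open>Mostar index: sum over unordered edges; summing over ordered adjacent pairs
counts each edge twice (the summand is symmetric), hence the division by 2.\<close>
definition mostar :: "'a set \<Rightarrow> ('a \<Rightarrow> 'a \<Rightarrow> bool) \<Rightarrow> real" where
  "mostar V E = (\<Sum>(u,v)\<in>{(u,v) \<in> V \<times> V. E u v}.
       \<bar>real (n_closer V E u v) - real (n_closer V E v u)\<bar>) / 2"

end

theory Submission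
  imports Defs
begin

lemma gdist_le:
  assumes "walk E xs" "hd xs = w" "last xs = u"
  shows "gdist E w u \<le> enat (length xs - 1)"
  unfolding gdist_def using assms by (intro INF_lower) auto

lemma gdist_self: "gdist E u u \<le> enat 0"
  using gdist_le[of E "[u]" u u] by simp

lemma gdist_edge: "E w u \<Longrightarrow> gdist E w u \<le> enat 1"
  using gdist_le[of E "[w,u]" w u] by simp

lemma gdist_ge1:
  assumes "u \<noteq> v"
  shows "enat 1 \<le> gdist E u v"
  unfolding gdist_def
proof (rule INF_greatest)
  fix xs assume "xs \<in> {xs. walk E xs \<and> hd xs = u \<and> last xs = v}"
  then have h: "walk E xs" "hd xs = u" "last xs = v" by auto
  show "enat 1 \<le> enat (length xs - 1)"
  proof (cases xs)
    case Nil then show ?thesis using h by simp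
  next
    case (Cons x ys)
    then show ?thesis using h assms by (cases ys) auto
  qed
qed

lemma gdist_ge2:
  assumes "w \<noteq> v" "\<not> E w v"
  shows "enat 2 \<le> gdist E w v"
  unfolding gdist_def
proof (rule INF_greatest)
  fix xs assume "xs \<in> {xs. walk E xs \<and> hd xs = w \<and> last xs = v}"
  then have h: "walk E xs" "hd xs = w" "last xs = v" by auto
  show "enat 2 \<le> enat (length xs - 1)"
  proof (cases xs)
    case Nil then show ?thesis using h by simp
  next
    case (Cons x ys)
    show ?thesis
    proof (cases ys)
      case Nil then show ?thesis using h Cons assms by simp
    next
      case (Cons y zs)
      then show ?thesis using h \<open>xs = x # ys\<close> assms by (cases zs) auto
    qed
  qed
qed

definition hh :: "real \<Rightarrow> real \<Rightarrow> real" where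
  "hh N d = d * (N/8 + 2 * max 0 (3*N/8 - d))"
definition HH :: "real \<Rightarrow> real \<Rightarrow> real" where
  "HH N c = (if c \<le> 7*N/32 then c*(7*N/8 - 2*c) else if c \<le> 49*N/64 then 49*N^2/512 else c*N/8)"

lemma hh_HH:
  assumes "0 \<le> d" "d \<le> c" "0 \<le> N"
  shows "hh N d \<le> HH N c"
proof -
  have amgm: "d*(7*N/8 - 2*d) \<le> 49*N^2/512"
  proof -
    have "0 \<le> 2*(d - 7*N/32)^2" by simp
    then show ?thesis by (simp add: power2_eq_square algebra_simps)
  qed
  consider "c \<le> 7*N/32" | "\<not> c \<le> 7*N/32" "c \<le> 49*N/64" | "\<not> c \<le> 49*N/64" "\<not> c \<le> 7*N/32" by linarith
  then show ?thesis
  proof cases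
    case 1
    have e: "hh N d = d*(7*N/8 - 2*d)" using 1 assms unfolding hh_def by (simp add: max_def algebra_simps)
    have "0 \<le> (c-d)*(7*N/8 - 2*(c+d))" using 1 assms by (intro mult_nonneg_nonneg) auto
    moreover have "(c-d)*(7*N/8 - 2*(c+d)) = c*(7*N/8-2*c) - d*(7*N/8-2*d)" by (simp add: field_simps)
    ultimately show ?thesis using e 1 unfolding HH_def by simp
  next
    case 2
    show ?thesis
    proof (cases "d \<le> 3*N/8")
      case True
      then have "hh N d = d*(7*N/8 - 2*d)" unfolding hh_def by (simp add: max_def algebra_simps)
      then show ?thesis using 2 amgm unfolding HH_def by simp
    next
      case False
      then have "hh N d = d*N/8" unfolding hh_def by (simp add: max_def algebra_simps)
      moreover have "d*N/8 \<le> (49*N/64)*N/8" using 2 assms by (intro divide_right_mono mult_right_mono) auto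
      moreover have "(49*N/64)*N/8 = 49*N^2/512" by (simp add: power2_eq_square)
      moreover have "HH N c = 49*N^2/512" using 2 unfolding HH_def by simp
      ultimately show ?thesis by linarith
    qed
  next
    case 3
    show ?thesis
    proof (cases "d \<le> 3*N/8")
      case True
      then have "hh N d = d*(7*N/8 - 2*d)" unfolding hh_def by (simp add: max_def algebra_simps)
      moreover have "49*N^2/512 \<le> c*N/8"
      proof -
        have "(49*N/64)*N \<le> c*N" using 3 assms by (intro mult_right_mono) auto
        moreover have "49*N^2/512 = ((49*N/64)*N)/8" by (simp add: power2_eq_square)
        ultimately show ?thesis by simp
      qed
      ultimately show ?thesis using 3 amgm unfolding HH_def by simp
    next
      case False
      then have "hh N d = d*N/8" unfolding hh_def by (simp add: max_def algebra_simps)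
      moreover have "d*N/8 \<le> c*N/8" using assms by (intro divide_right_mono mult_right_mono) auto
      ultimately show ?thesis using 3 unfolding HH_def by simp
    qed
  qed
qed

lemma sqrt3_bounds: "1.7304 \<le> sqrt (3::real)"
  by (rule real_le_rsqrt) (simp add: power2_eq_square)

lemma kfun:
  assumes "0 \<le> a" "a \<le> 7*N/32" "b = N - a" "0 \<le> N"
  shows "a*b*(b-a) \<le> sqrt 3 / 18 * N^3"
proof -
  define s where "s = sqrt (3::real)"
  have s2: "s^2 = 3" unfolding s_def by simp
  have sp: "s > 0" unfolding s_def by simp
  have sge: "1.7304 \<le> s" unfolding s_def by (rule sqrt3_bounds)
  have ss: "\<And>x. s*(s*x) = 3*x" using s2 by (simp add: power2_eq_square flip: mult.assoc)
  define al where "al = (s - 1)/(2*s)"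
  define be where "be = 1/2 + 1/s"
  have id: "s/18*N^3 - a*b*(b-a) = 2*(a - al*N)^2*(be*N - a)"
    unfolding al_def be_def assms(3) using sp s2
    by (simp add: field_simps power2_eq_square power3_eq_cube ss)
  have "be*N - a \<ge> 0"
  proof -
    have "be \<ge> 1/2" unfolding be_def using sp by simp
    then have "be*N \<ge> N/2" using assms by (metis mult_right_mono mult.commute times_divide_eq_right mult_1 div_by_1 divide_real_def) 
    then show ?thesis using assms by linarith
  qed
  then have "0 \<le> 2*(a - al*N)^2*(be*N - a)" by simp
  then show ?thesis using id unfolding s_def by linarith
qed

lemma mid1:
  assumes "7*N/32 \<le> a" "b = N - a" "0 \<le> N"
  shows "a*(b*N/8) + b*(49*N^2/512) \<le> sqrt 3 / 18 * N^3"
proof -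
  have "0 \<le> (a - 7*N/32)*(64*a - N)" using assms by (intro mult_nonneg_nonneg) auto
  moreover have "b*(64*a+49*N) = 1575*N^2/32 - (a - 7*N/32)*(64*a - N)"
    unfolding assms(2) by (simp add: field_simps power2_eq_square)
  ultimately have "b*(64*a+49*N) \<le> 1575*N^2/32" by simp
  then have "N*(b*(64*a+49*N)) \<le> N*(1575*N^2/32)" using assms by (intro mult_left_mono) auto
  moreover have "N^3*(1575/16384) \<le> N^3*(sqrt 3/18)" using sqrt3_bounds assms by (intro mult_left_mono) auto
  ultimately show ?thesis by (simp add: algebra_simps power2_eq_square power3_eq_cube)
qed

lemma final_ineq:
  assumes "0 \<le> a" "0 \<le> b" "a + b = N"
  shows "a * HH N b + b * HH N a \<le> sqrt 3 / 18 * N^3"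
proof -
  have N: "0 \<le> N" using assms by simp
  have NN: "N = a + b" using assms by simp
  have c49: "N^3*(49/512) \<le> N^3*(sqrt 3/18)" using sqrt3_bounds N by (intro mult_left_mono) auto
  consider "a \<le> 7*N/32" | "b \<le> 7*N/32" | "7*N/32 < a" "7*N/32 < b" "a \<le> 49*N/64" "b \<le> 49*N/64"
    | "7*N/32 < a" "49*N/64 < b" | "7*N/32 < b" "49*N/64 < a" by linarith
  then show ?thesis
  proof cases
    case 1
    then have "HH N a = a*(7*N/8 - 2*a)" "HH N b = b*N/8" using assms unfolding HH_def by auto
    then have "a * HH N b + b * HH N a = a*(b*N/8) + b*(a*(7*N/8-2*a))" by simp
    also have "\<dots> = a*b*(b-a)" by (simp add: NN field_simps)
    also have "a*b*(b-a) \<le> sqrt 3 / 18 * N^3" using kfun[of a N b] 1 assms by auto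
    finally show ?thesis .
  next
    case 2
    then have "HH N b = b*(7*N/8 - 2*b)" "HH N a = a*N/8" using assms unfolding HH_def by auto
    then have "a * HH N b + b * HH N a = a*(b*(7*N/8-2*b)) + b*(a*N/8)" by simp
    also have "\<dots> = b*a*(a-b)" by (simp add: NN field_simps)
    also have "b*a*(a-b) \<le> sqrt 3 / 18 * N^3" using kfun[of b N a] 2 assms by auto
    finally show ?thesis .
  next
    case 3
    then have "HH N b = 49*N^2/512" "HH N a = 49*N^2/512" unfolding HH_def by auto
    then have "a * HH N b + b * HH N a = N^3*(49/512)" using assms
      by (simp add: algebra_simps power2_eq_square power3_eq_cube flip: distrib_left)
    then show ?thesis using c49 by (simp add: mult.commute)
  next
    case 4
    then have h: "HH N b = b*N/8" "HH N a = 49*N^2/512" using assms unfolding HH_def by auto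
    then have "a * HH N b + b * HH N a = a*(b*N/8) + b*(49*N^2/512)" by (simp only: h)
    moreover have "a*(b*N/8) + b*(49*N^2/512) \<le> sqrt 3 / 18 * N^3"
      by (rule mid1) (use 4 assms N in linarith)+
    ultimately show ?thesis by linarith
  next
    case 5
    then have h: "HH N a = a*N/8" "HH N b = 49*N^2/512" using assms unfolding HH_def by auto
    then have "a * HH N b + b * HH N a = b*(a*N/8) + a*(49*N^2/512)" by (simp only: h add.commute)
    moreover have "b*(a*N/8) + a*(49*N^2/512) \<le> sqrt 3 / 18 * N^3"
      by (rule mid1) (use 5 assms N in linarith)+
    ultimately show ?thesis by linarith
  qed
qed


definition deg :: "'a set \<Rightarrow> ('a \<Rightarrow> 'a \<Rightarrow> bool) \<Rightarrow> 'a \<Rightarrow> nat" where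
  "deg V E x = card {y \<in> V. E x y}"

lemma enat_lt12: "x \<le> enat 1 \<Longrightarrow> enat 2 \<le> y \<Longrightarrow> x < y"
  by (metis le_less_trans less_le_trans enat_ord_simps(2) one_less_numeral_iff semiring_norm(76))

lemma enat_lt01: "x \<le> enat 0 \<Longrightarrow> enat 1 \<le> y \<Longrightarrow> x < y"
  by (metis le_less_trans less_le_trans enat_ord_simps(2) zero_less_one)

lemma deg_le_closer:
  assumes G: "simple_graph V E" and AB: "A \<union> B = V" "A \<inter> B = {}"
    "\<forall>x y. E x y \<longrightarrow> (x \<in> A \<and> y \<in> B) \<or> (x \<in> B \<and> y \<in> A)"
    and uv: "E u v"
  shows "deg V E u \<le> n_closer V E u v"
proof -
  have fin: "finite V" using G unfolding simple_graph_def by auto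
  have uV: "u \<in> V" and vV: "v \<in> V" using G uv unfolding simple_graph_def by auto
  have sym: "\<And>x y. E x y \<Longrightarrow> E y x" using G unfolding simple_graph_def by auto
  have irr: "\<And>x. \<not> E x x" using G unfolding simple_graph_def by auto
  let ?N = "{y \<in> V. E u y}"
  have sub: "insert u (?N - {v}) \<subseteq> {w \<in> V. gdist E w u < gdist E w v}"
  proof
    fix w assume w: "w \<in> insert u (?N - {v})"
    show "w \<in> {w \<in> V. gdist E w u < gdist E w v}"
    proof (cases "w = u")
      case True
      have "u \<noteq> v" using uv irr by auto
      then show ?thesis using True uV gdist_self[of E u] gdist_ge1[of u v E] enat_lt01 by auto
    next
      case False
      then have wN: "w \<in> V" "E u w" "w \<noteq> v" using w by auto
      have "\<not> E w v" using AB(2,3) wN(2) uv by blast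
      then have "enat 2 \<le> gdist E w v" using gdist_ge2 wN(3) by metis
      moreover have "gdist E w u \<le> enat 1" using gdist_edge sym wN(2) by metis
      ultimately show ?thesis using enat_lt12 wN(1) by auto
    qed
  qed
  have "u \<notin> ?N - {v}" using irr by auto
  moreover have "finite ?N" using fin by auto
  moreover have "v \<in> ?N" using uv vV by auto
  ultimately have "card (insert u (?N - {v})) = card ?N"
  proof -
    assume a: "u \<notin> ?N - {v}" "finite ?N" "v \<in> ?N"
    have "card (insert u (?N - {v})) = Suc (card (?N - {v}))" using a by simp
    moreover have "card (?N - {v}) = card ?N - 1" using a by (simp add: card_Diff_singleton)
    moreover have "card ?N > 0" using a by (auto simp: card_gt_0_iff)
    ultimately show ?thesis by simp
  qed
  moreover have "card (insert u (?N - {v})) \<le> n_closer V E u v"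
    unfolding n_closer_def using sub fin by (intro card_mono) auto
  ultimately show ?thesis unfolding deg_def by simp
qed

lemma closer_sum:
  assumes G: "simple_graph V E"
  shows "n_closer V E u v + n_closer V E v u \<le> card V"
proof -
  have fin: "finite V" using G unfolding simple_graph_def by auto
  have "n_closer V E u v + n_closer V E v u =
     card ({w \<in> V. gdist E w u < gdist E w v} \<union> {w \<in> V. gdist E w v < gdist E w u})"
    unfolding n_closer_def using fin by (subst card_Un_disjoint) auto
  also have "\<dots> \<le> card V" using fin by (intro card_mono) auto
  finally show ?thesis .
qed

lemma lin_aux:
  fixes x y du dv N Mu Mv :: real
  assumes "du \<le> x" "dv \<le> y" "x + y \<le> N" "Mu \<ge> 3*N/8 - du" "Mu \<ge> 0" "Mv \<ge> 3*N/8 - dv" "Mv \<ge> 0"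
  shows "\<bar>x - y\<bar> \<le> (N/8 + 2 * Mu) + (N/8 + 2 * Mv)"
proof -
  have "x - y \<le> (N/8 + 2 * Mu) + (N/8 + 2 * Mv)" using assms by linarith
  moreover have "y - x \<le> (N/8 + 2 * Mu) + (N/8 + 2 * Mv)" using assms by linarith
  ultimately show ?thesis by (simp add: abs_le_iff)
qed

lemma real_edge_ineq:
  fixes x y du dv N :: real
  assumes "du \<le> x" "dv \<le> y" "x + y \<le> N"
  shows "\<bar>x - y\<bar> \<le> (N/8 + 2 * max 0 (3*N/8 - du)) + (N/8 + 2 * max 0 (3*N/8 - dv))"
  by (rule lin_aux) (use assms in auto)

lemma edge_bound:
  assumes G: "simple_graph V E" and AB: "A \<union> B = V" "A \<inter> B = {}"
    "\<forall>x y. E x y \<longrightarrow> (x \<in> A \<and> y \<in> B) \<or> (x \<in> B \<and> y \<in> A)"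
    and uv: "E u v"
  shows "\<bar>real (n_closer V E u v) - real (n_closer V E v u)\<bar>
     \<le> (real (card V)/8 + 2 * max 0 (3*real (card V)/8 - real (deg V E u)))
      + (real (card V)/8 + 2 * max 0 (3*real (card V)/8 - real (deg V E v)))"
proof -
  have sym: "E v u" using G uv unfolding simple_graph_def by auto
  have sym2: "\<forall>x y. E x y \<longrightarrow> (x \<in> B \<and> y \<in> A) \<or> (x \<in> A \<and> y \<in> B)" using AB(3) by blast
  have 1: "real (deg V E u) \<le> real (n_closer V E u v)"
    using deg_le_closer[OF G AB uv] by simp
  have 2: "real (deg V E v) \<le> real (n_closer V E v u)"
    using deg_le_closer[OF G _ _ sym2 sym] AB by (simp add: Un_commute Int_commute)
  have 3: "real (n_closer V E u v) + real (n_closer V E v u) \<le> real (card V)"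
    using closer_sum[OF G, of u v] by (metis of_nat_add of_nat_mono)
  show ?thesis by (rule real_edge_ineq[OF 1 2 3])
qed


lemma alpha_id:
  assumes "\<alpha>\<^sub>1 = (1 - 1 / sqrt 3) / 2"
  shows "\<alpha>\<^sub>1 * (1 - \<alpha>\<^sub>1) * (1 - 2 * \<alpha>\<^sub>1) = sqrt 3 / 18"
proof -
  define s where "s = sqrt (3::real)"
  have s2: "s*s = 3" unfolding s_def by simp
  have sp: "s > 0" unfolding s_def by simp
  have ss: "\<And>x. s*(s*x) = 3*x" using s2 by (simp flip: mult.assoc)
  show ?thesis unfolding assms s_def[symmetric] using sp s2
    by (simp add: field_simps ss)
qed

lemma sum_swap:
  assumes "\<And>x y. E x y \<Longrightarrow> E y x"
  shows "(\<Sum>(u,v)\<in>{(u,v) \<in> V \<times> V. E u v}. (g v::real)) = (\<Sum>(u,v)\<in>{(u,v) \<in> V \<times> V. E u v}. g u)"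
proof -
  let ?P = "{(u,v) \<in> V \<times> V. E u v}"
  have "prod.swap ` ?P = ?P" using assms by auto
  moreover have "inj_on prod.swap ?P" by simp
  ultimately have "(\<Sum>p\<in>prod.swap ` ?P. (\<lambda>(u,v). g u) p) = (\<Sum>p\<in>?P. ((\<lambda>(u,v). g u) \<circ> prod.swap) p)"
    by (intro sum.reindex) 
  then have "(\<Sum>(u,v)\<in>?P. g u) = (\<Sum>p\<in>?P. ((\<lambda>(u,v). g u) \<circ> prod.swap) p)"
    using \<open>prod.swap ` ?P = ?P\<close> by simp
  then show ?thesis by (simp add: case_prod_beta comp_def)
qed

lemma sum_deg:
  assumes "finite V"
  shows "(\<Sum>(u,v)\<in>{(u,v) \<in> V \<times> V. E u v}. (g u::real)) = (\<Sum>u\<in>V. real (deg V E u) * g u)"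
proof -
  have "{(u,v) \<in> V \<times> V. E u v} = Sigma V (\<lambda>u. {v \<in> V. E u v})" by auto
  moreover have "(\<Sum>u\<in>V. \<Sum>v\<in>{v \<in> V. E u v}. g u) = (\<Sum>(u,v)\<in>Sigma V (\<lambda>u. {v \<in> V. E u v}). g u)"
    using assms by (intro sum.Sigma) auto
  ultimately have "(\<Sum>(u,v)\<in>{(u,v) \<in> V \<times> V. E u v}. g u) = (\<Sum>u\<in>V. \<Sum>v\<in>{v \<in> V. E u v}. g u)"
    by simp
  then show ?thesis unfolding deg_def by simp
qed

theorem theorem1:
  fixes V :: "'a set" and E :: "'a \<Rightarrow> 'a \<Rightarrow> bool" and n :: nat and \<alpha>\<^sub>1 :: real
  assumes "simple_graph V E" and "bipartite V E" and "n = card V"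
    and "\<alpha>\<^sub>1 = (1 - 1 / sqrt 3) / 2"
  shows "mostar V E \<le> \<alpha>\<^sub>1 * (1 - \<alpha>\<^sub>1) * (1 - 2 * \<alpha>\<^sub>1) * real n ^ 3
         \<and> \<alpha>\<^sub>1 * (1 - \<alpha>\<^sub>1) * (1 - 2 * \<alpha>\<^sub>1) * real n ^ 3 = sqrt 3 / 18 * real n ^ 3"
proof -
  note G = assms(1)
  obtain A B where AB: "A \<union> B = V" "A \<inter> B = {}"
    "\<forall>x y. E x y \<longrightarrow> (x \<in> A \<and> y \<in> B) \<or> (x \<in> B \<and> y \<in> A)"
    using assms(2) unfolding bipartite_def by blast
  have fin: "finite V" using G unfolding simple_graph_def by auto
  have sym: "\<And>x y. E x y \<Longrightarrow> E y x" using G unfolding simple_graph_def by auto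
  define N where "N = real (card V)"
  define g where "g x = N/8 + 2 * max 0 (3*N/8 - real (deg V E x))" for x
  let ?P = "{(u,v) \<in> V \<times> V. E u v}"
  have pw: "\<bar>real (n_closer V E u v) - real (n_closer V E v u)\<bar> \<le> g u + g v" if "(u,v) \<in> ?P" for u v
  proof -
    have "E u v" using that by simp
    from edge_bound[OF G AB this] show ?thesis unfolding g_def N_def .
  qed
  have "mostar V E = (\<Sum>(u,v)\<in>?P. \<bar>real (n_closer V E u v) - real (n_closer V E v u)\<bar>) / 2"
    unfolding mostar_def by simp
  also have "\<dots> \<le> (\<Sum>(u,v)\<in>?P. g u + g v) / 2"
    apply (intro divide_right_mono sum_mono)
    using pw by auto
  also have "(\<Sum>(u,v)\<in>?P. g u + g v) = (\<Sum>(u,v)\<in>?P. g u) + (\<Sum>(u,v)\<in>?P. g v)"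
    by (simp add: sum.distrib case_prod_beta)
  also have "\<dots> = 2 * (\<Sum>u\<in>V. real (deg V E u) * g u)"
    using sum_swap[where E=E and g=g and V=V, OF sym] sum_deg[OF fin, where E=E and g=g] by simp
  finally have m1: "mostar V E \<le> (\<Sum>u\<in>V. hh N (real (deg V E u)))"
    unfolding hh_def g_def by simp
  have finA: "finite A" and finB: "finite B" using fin AB(1) by auto
  have degA: "deg V E x \<le> card B" if "x \<in> A" for x
    unfolding deg_def using AB that finB by (intro card_mono) auto
  have degB: "deg V E x \<le> card A" if "x \<in> B" for x
    unfolding deg_def using AB that finA by (intro card_mono) auto
  have N0: "0 \<le> N" unfolding N_def by simp
  have "(\<Sum>u\<in>V. hh N (real (deg V E u))) = (\<Sum>u\<in>A. hh N (real (deg V E u))) + (\<Sum>u\<in>B. hh N (real (deg V E u)))"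
    using sum.union_disjoint[OF finA finB AB(2)] AB(1) by simp
  also have "\<dots> \<le> (\<Sum>u\<in>A. HH N (real (card B))) + (\<Sum>u\<in>B. HH N (real (card A)))"
    using degA degB N0 by (intro add_mono sum_mono hh_HH) auto
  also have "\<dots> = real (card A) * HH N (real (card B)) + real (card B) * HH N (real (card A))"
    by simp
  also have "\<dots> \<le> sqrt 3 / 18 * N^3"
  proof (rule final_ineq)
    show "real (card A) + real (card B) = N" unfolding N_def
    proof -
      have "card A + card B = card V" using card_Un_disjoint[OF finA finB AB(2)] AB(1) by simp
      then show "real (card A) + real (card B) = real (card V)" by (metis of_nat_add)
    qed
  qed auto
  finally have "mostar V E \<le> sqrt 3 / 18 * N^3" using m1 by linarith
  then show ?thesis unfolding alpha_id[OF assms(4)] assms(3) N_def by simp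
qed

end
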